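(* Let $g$ be monotone increasing and satisfy hypothesis (H), let $h\ge0$, let $\phi(x+ct)$ with $c=c_*>c_\#$ be a pushed traveling front, and fix $\lambda\in(\lambda_1(c),\lambda_2(c))$. There exist constants $\gamma>0$ and $\delta>0$ such that the following holds. Let $w$ be a solution of $$w_t(t,z)=w_{zz}(t,z)-cw_z(t,z)-w(t,z)+g(w(t-h,z-ch)),\ t>0,\ z\in\mathbb{R},$$ with continuous initial datum $w(s,z)=\tilde w_0(s,z)\in[0,\kappa]$, $s\in[-h,0]$, locally Hölder in $z$ uniformly in $s$. Let $R>ch$ be such that $0\le w(t,z),\phi(z)\le\delta$ whenever $z\le-R+ch$, $t\ge-h$, and $|w(t,z)-\kappa|,|\phi(z)-\kappa|<\delta$ whenever $z\ge R-ch$, $t\ge-h$. Suppose further that $w(s,z)\le\phi(z)+\delta\eta(z)$ for all $(s,z)\in[-h,0]\times\mathbb{R}$ and $w(t,z)\le\phi(z)$ for all $(t,z)\in\mathbb{R}_+\times[-R-ch,R+ch]$. Then $w(t,z)\le\phi(z)+\delta\eta(z)e^{-\gamma t}$ for all $z\in\mathbb{R}$, $t\ge0$.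
   Context: Hypothesis (H) on $g:\mathbb{R}_+\to\mathbb{R}_+$: $g(x)=x$ has exactly two nonnegative solutions $0$ and $\kappa>0$; $g$ is $C^1$ in a $\delta_0$-neighbourhood of $0$ and of $\kappa$, with $g'(0)>1$, $g'(\kappa)<1$; $|g(u)-g(v)|\le L_g|u-v|$ for $u,v\in[0,\kappa]$; there are $C>0,\theta\in(0,1]$ with $|g'(u)-g'(0)|+|g'(\kappa)-g'(\kappa-u)|\le Cu^\theta$ for $u\in(0,\delta_0]$; $g$ is extended linearly and $C^1$-smoothly to $(-\infty,0]$ and $[\kappa,\infty)$. Characteristic function $\chi(z,c)=z^2-cz-1+g'(0)e^{-zch}$; $c_\#$ is the unique real $c$ for which $\chi(\cdot,c)$ has a positive double zero; for $c>c_\#$ its two positive simple zeros are $\lambda_1(c)<\lambda_2(c)$. A wavefront is a solution $u=\phi(x+ct)$ of $u_t=u_{xx}-u+g(u(t-h,x))$ with $\phi>0$, $\phi(-\infty)=0$, $\phi(+\infty)=\kappa$; $c_*$ is the minimal wavefront speed; the minimal wavefront is pushed if $c_*>c_\#$. $\eta(z)=\min\{e^{\lambda z},1\}$. *)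

theory Defs
  imports "HOL-Analysis.Analysis"
begin

definition C1_near :: "(real \<Rightarrow> real) \<Rightarrow> real \<Rightarrow> real \<Rightarrow> bool" where
  "C1_near g a d \<longleftrightarrow> (\<forall>x\<in>ball a d. g differentiable (at x)) \<and> continuous_on (ball a d) (deriv g)"

(* Hypothesis (H), for g already extended to the whole real line *)
definition hypH :: "(real \<Rightarrow> real) \<Rightarrow> real \<Rightarrow> bool" where
  "hypH g \<kappa> \<longleftrightarrow> \<kappa> > 0 \<and> (\<forall>x\<ge>0. g x \<ge> 0) \<and>
     {x. x \<ge> 0 \<and> g x = x} = {0, \<kappa>} \<and>
     (\<exists>\<delta>0 > 0. C1_near g 0 \<delta>0 \<and> C1_near g \<kappa> \<delta>0 \<and>
        (\<exists>C > 0. \<exists>\<theta>. 0 < \<theta> \<and> \<theta> \<le> 1 \<and>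
           (\<forall>u. 0 < u \<and> u \<le> \<delta>0 \<longrightarrow>
              \<bar>deriv g u - deriv g 0\<bar> + \<bar>deriv g \<kappa> - deriv g (\<kappa> - u)\<bar> \<le> C * u powr \<theta>))) \<and>
     deriv g 0 > 1 \<and> deriv g \<kappa> < 1 \<and>
     (\<exists>Lg. \<forall>u\<in>{0..\<kappa>}. \<forall>v\<in>{0..\<kappa>}. \<bar>g u - g v\<bar> \<le> Lg * \<bar>u - v\<bar>) \<and>
     (\<forall>x\<le>0. g x = deriv g 0 * x) \<and>
     (\<forall>x\<ge>\<kappa>. g x = \<kappa> + deriv g \<kappa> * (x - \<kappa>))"

definition chi :: "(real \<Rightarrow> real) \<Rightarrow> real \<Rightarrow> real \<Rightarrow> real \<Rightarrow> real" where
  "chi g h z c = z^2 - c * z - 1 + deriv g 0 * exp (- z * c * h)"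

definition c_sharp :: "(real \<Rightarrow> real) \<Rightarrow> real \<Rightarrow> real" where
  "c_sharp g h = (THE c. \<exists>z>0. chi g h z c = 0 \<and> deriv (\<lambda>y. chi g h y c) z = 0)"

(* the two positive zeros lambda_1(c) < lambda_2(c) for c > c_# *)
definition lambda1 :: "(real \<Rightarrow> real) \<Rightarrow> real \<Rightarrow> real \<Rightarrow> real" where
  "lambda1 g h c = Min {z. z > 0 \<and> chi g h z c = 0}"

definition lambda2 :: "(real \<Rightarrow> real) \<Rightarrow> real \<Rightarrow> real \<Rightarrow> real" where
  "lambda2 g h c = Max {z. z > 0 \<and> chi g h z c = 0}"

definition classical_sol ::
  "(real \<Rightarrow> real) \<Rightarrow> real \<Rightarrow> real \<Rightarrow> real \<Rightarrow> real set \<Rightarrow> (real \<Rightarrow> real \<Rightarrow> real) \<Rightarrow> bool" where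
  "classical_sol g h a b T u \<longleftrightarrow>
     (\<forall>t\<in>T. \<forall>x.
        (\<lambda>s. u s x) differentiable (at t) \<and>
        (\<forall>y. (\<lambda>y'. u t y') differentiable (at y)) \<and>
        deriv (\<lambda>y'. u t y') differentiable (at x) \<and>
        deriv (\<lambda>s. u s x) t =
          deriv (deriv (\<lambda>y'. u t y')) x - a * deriv (\<lambda>y'. u t y') x - u t x
          + g (u (t - h) (x - b)))"

definition wavefront :: "(real \<Rightarrow> real) \<Rightarrow> real \<Rightarrow> real \<Rightarrow> real \<Rightarrow> (real \<Rightarrow> real) \<Rightarrow> bool" where
  "wavefront g \<kappa> h c \<phi> \<longleftrightarrow> (\<forall>s. \<phi> s > 0) \<and> (\<phi> \<longlongrightarrow> 0) at_bot \<and> (\<phi> \<longlongrightarrow> \<kappa>) at_top \<and>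
     classical_sol g h 0 0 UNIV (\<lambda>t x. \<phi> (x + c * t))"

definition c_star :: "(real \<Rightarrow> real) \<Rightarrow> real \<Rightarrow> real \<Rightarrow> real" where
  "c_star g \<kappa> h = Inf {c. \<exists>\<phi>. wavefront g \<kappa> h c \<phi>}"

definition eta :: "real \<Rightarrow> real \<Rightarrow> real" where
  "eta lam z = min (exp (lam * z)) 1"

end

theory Submission
  imports Defs
begin


lemma max2:
  fixes f f' :: "real \<Rightarrow> real"
  assumes d1: "\<And>y. (f has_real_derivative f' y) (at y)"
    and d2: "(f' has_real_derivative f2) (at x)"
    and r: "r > 0" and mx: "\<And>y. \<bar>x - y\<bar> < r \<Longrightarrow> f y \<le> f x"
  shows "f' x = 0 \<and> f2 \<le> 0"
proof -
  have z: "f' x = 0" using DERIV_local_max[OF d1 r] mx by blast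
  have "f2 \<le> 0"
  proof (rule ccontr)
    assume "\<not> f2 \<le> 0"
    then have "f2 > 0" by simp
    from DERIV_pos_inc_right[OF d2 this] obtain d where d: "d > 0" "\<And>h. h > 0 \<Longrightarrow> h < d \<Longrightarrow> f' x < f' (x + h)" by blast
    define y where "y = x + min d r / 2"
    have xy: "x < y" using d r by (simp add: y_def)
    from MVT2[OF xy, of f f'] d1 obtain \<xi> where \<xi>: "x < \<xi>" "\<xi> < y" "f y - f x = (y - x) * f' \<xi>" by blast
    have "f' \<xi> > 0" using d(2)[of "\<xi> - x"] \<xi> z d r by (simp add: y_def)
    then have "(y - x) * f' \<xi> > 0" using xy by simp
    then have "f y > f x" using \<xi> by linarith
    moreover have "f y \<le> f x" using mx[of y] r d by (simp add: y_def)
    ultimately show False by simp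
  qed
  with z show ?thesis by simp
qed

lemma time_max:
  fixes f :: "real \<Rightarrow> real"
  assumes d1: "(f has_real_derivative l) (at x)"
    and d: "d > 0" and mx: "\<And>h. 0 < h \<Longrightarrow> h < d \<Longrightarrow> f (x - h) \<le> f x"
  shows "l \<ge> 0"
proof (rule ccontr)
  assume "\<not> l \<ge> 0"
  then have "l < 0" by simp
  from DERIV_neg_dec_left[OF d1 this] obtain e where e: "e > 0" "\<And>h. h > 0 \<Longrightarrow> h < e \<Longrightarrow> f x < f (x - h)" by blast
  have "f x < f (x - min d e / 2)" using e(2)[of "min d e/2"] e d by simp
  moreover have "f (x - min d e / 2) \<le> f x" using mx[of "min d e / 2"] e d by simp
  ultimately show False by simp
qed



lemma touch:
  fixes V :: "real \<Rightarrow> real \<Rightarrow> real"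
  assumes cont: "continuous_on ({0..T} \<times> {a..b}) (\<lambda>p. V (fst p) (snd p))"
    and bd: "\<And>t. t\<in>{0..T} \<Longrightarrow> V t a < 0 \<and> V t b < 0"
    and init: "\<And>z. z\<in>{a..b} \<Longrightarrow> V 0 z < 0"
    and bad: "t1 \<in> {0..T}" "z1 \<in> {a..b}" "V t1 z1 \<ge> 0"
  shows "\<exists>t0 z0. 0 < t0 \<and> t0 \<le> T \<and> a < z0 \<and> z0 < b \<and> V t0 z0 = 0
     \<and> (\<forall>t\<in>{0..<t0}. \<forall>z\<in>{a..b}. V t z < 0) \<and> (\<forall>z\<in>{a..b}. V t0 z \<le> 0)"
proof -
  define K where "K = {0..T} \<times> {a..b}"
  define S where "S = {p \<in> K. (\<lambda>p. 0) p \<le> V (fst p) (snd p)}"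
  have cK: "compact K" unfolding K_def by (intro compact_Times) auto
  have clS: "closed S" unfolding S_def
    by (rule continuous_on_closed_Collect_le) (use cont cK compact_imp_closed in \<open>auto simp: K_def\<close>)
  have "S = K \<inter> S" unfolding S_def by auto
  then have cS: "compact S" using compact_Int_closed[OF cK clS] by simp
  have ne: "S \<noteq> {}" using bad unfolding S_def K_def by force
  obtain p0 where p0: "p0 \<in> S" "\<And>q. q \<in> S \<Longrightarrow> fst p0 \<le> fst q"
    using continuous_attains_inf[OF cS ne continuous_on_fst[OF continuous_on_id]] by auto
  obtain t0 z0 where pz: "p0 = (t0, z0)" by (cases p0)
  have t0: "t0 \<in> {0..T}" and z0: "z0 \<in> {a..b}" and V0: "V t0 z0 \<ge> 0"
    using p0(1) pz unfolding S_def K_def by auto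
  have neg: "V t z < 0" if "t \<in> {0..<t0}" "z \<in> {a..b}" for t z
  proof (rule ccontr)
    assume "\<not> V t z < 0"
    then have "(t, z) \<in> S" using that t0 unfolding S_def K_def by auto
    from p0(2)[OF this] pz that show False by simp
  qed
  have t0pos: "t0 > 0"
  proof (rule ccontr)
    assume "\<not> t0 > 0" then have "t0 = 0" using t0 by simp
    with init[OF z0] V0 show False by simp
  qed
  have le: "V t0 z \<le> 0" if z: "z \<in> {a..b}" for z
  proof (rule ccontr)
    assume "\<not> V t0 z \<le> 0"
    then have pos: "V t0 z > 0" by simp
    have "continuous_on {0..T} (\<lambda>t. V t z)"
    proof -
      have "continuous_on {0..T} ((\<lambda>p. V (fst p) (snd p)) \<circ> (\<lambda>t. (t, z)))"
        by (rule continuous_on_compose) (auto intro!: continuous_intros continuous_on_subset[OF cont] simp: z[simplified])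
      then show ?thesis by (simp add: o_def)
    qed
    then have "continuous (at t0 within {0..T}) (\<lambda>t. V t z)"
      using t0 continuous_on_eq_continuous_within by blast
    then have "eventually (\<lambda>t. V t z > 0) (at t0 within {0..T})"
      using pos by (simp add: continuous_within order_tendstoD(1))
    then obtain d where d: "d > 0" "\<And>t. t \<in> {0..T} \<Longrightarrow> t \<noteq> t0 \<Longrightarrow> dist t t0 < d \<Longrightarrow> V t z > 0"
      unfolding eventually_at by blast
    define t where "t = max 0 (t0 - d/2)"
    have "t \<in> {0..<t0}" using t0pos d t0 by (auto simp: t_def)
    moreover have "V t z > 0" using d t0 t0pos by (intro d(2)) (auto simp: t_def dist_real_def)
    ultimately show False using neg z by force
  qed
  have "V t0 z0 = 0" using le[OF z0] V0 by simp
  moreover have "z0 \<noteq> a" "z0 \<noteq> b" using bd[OF t0] \<open>V t0 z0 = 0\<close> by auto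
  ultimately show ?thesis using t0pos t0 z0 neg le
    by (intro exI[of _ t0] exI[of _ z0]) auto
qed



lemma Min_Max_degenerate:
  fixes S :: "real set"
  assumes "\<not> (finite S \<and> S \<noteq> {})"
  shows "Min S = Max S"
proof (cases "finite S")
  case True
  then have "S = {}" using assms by simp
  then show ?thesis by (simp add: Min.eq_fold' Max.eq_fold')
next
  case False
  then show ?thesis by (simp add: Min.infinite Max.infinite)
qed

lemma chi_neg:
  assumes l1: "lambda1 g h c < lam" and l2: "lam < lambda2 g h c" and d0: "deriv g 0 > 0"
  shows "chi g h lam c < 0 \<and> lam > 0"
proof -
  define S where "S = {z. z > 0 \<and> chi g h z c = 0}"
  have fS: "finite S" "S \<noteq> {}"
    using Min_Max_degenerate[of S] l1 l2 unfolding lambda1_def lambda2_def S_def[symmetric] by force+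
  define a where "a = Min S"
  define b where "b = Max S"
  have aS: "a \<in> S" and bS: "b \<in> S" using fS by (auto simp: a_def b_def)
  have al: "a < lam" and lb: "lam < b" using l1 l2 by (auto simp: lambda1_def lambda2_def S_def[symmetric] a_def b_def)
  define s where "s = (lam - a) / (b - a)"
  have s0: "0 < s" and s1: "s < 1" using al lb by (auto simp: s_def field_simps)
  have "s * (b - a) = lam - a" using al lb by (simp add: s_def)
  then have lam_eq: "lam = (1 - s) * a + s * b" by (simp add: algebra_simps)
  have ex: "exp ((1 - s) * (- a * c * h) + s * (- b * c * h)) \<le> (1 - s) * exp (- a * c * h) + s * exp (- b * c * h)"
    using convex_onD[OF exp_convex, of s "- a * c * h" "- b * c * h"] s0 s1 by simp
  have ex2: "exp (- lam * c * h) \<le> (1 - s) * exp (- a * c * h) + s * exp (- b * c * h)"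
  proof -
    have "- lam * c * h = (1 - s) * (- a * c * h) + s * (- b * c * h)" by (simp add: lam_eq algebra_simps)
    then show ?thesis using ex by simp
  qed
  have sq: "lam^2 < (1 - s) * a^2 + s * b^2"
  proof -
    have "(1 - s) * a^2 + s * b^2 - lam^2 = s * (1 - s) * (b - a)^2"
      by (simp add: lam_eq power2_eq_square algebra_simps)
    moreover have "s * (1 - s) * (b - a)^2 > 0" using s0 s1 al lb by simp
    ultimately show ?thesis by linarith
  qed
  have ca: "chi g h a c = 0" and cb: "chi g h b c = 0" using aS bS by (auto simp: S_def)
  have "chi g h lam c < (1 - s) * chi g h a c + s * chi g h b c"
  proof -
    have "deriv g 0 * exp (- lam * c * h) \<le> deriv g 0 * ((1 - s) * exp (- a * c * h) + s * exp (- b * c * h))"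
      using ex2 d0 by (simp add: mult_left_mono)
    then show ?thesis using sq unfolding chi_def by (simp add: lam_eq algebra_simps)
  qed
  then have "chi g h lam c < 0" using ca cb by simp
  moreover have "lam > 0" using aS al by (auto simp: S_def)
  ultimately show ?thesis by simp
qed

lemma mvt_bound:
  fixes g :: "real \<Rightarrow> real"
  assumes "p < a" "\<And>x. x\<in>{p..a} \<Longrightarrow> (g has_real_derivative deriv g x) (at x)"
    "\<And>x. x\<in>{p<..<a} \<Longrightarrow> deriv g x \<le> K"
  shows "g a - g p \<le> K * (a - p)"
proof -
  obtain z where z: "p < z" "z < a" "g a - g p = (a - p) * deriv g z"
    using MVT2[OF assms(1), of g "deriv g"] assms(2) by auto
  have "deriv g z \<le> K" using assms(3) z by auto
  then show ?thesis using z assms(1) by (simp add: mult.commute mult_right_mono)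
qed



lemma bracket_le:
  fixes c h K z :: real
  assumes "K \<ge> 0"
  shows "1 - 2*c*z - z^2 + K*(1 + (z - c*h)^2) \<le> (2 + c^2 + 2*K*(1 + c^2*h^2)) * (1 + z^2)"
proof -
  have a0: "0 \<le> (z + c*h)^2" by simp
  have a: "(z - c*h)^2 \<le> 2*z^2 + 2*(c^2*h^2)" using a0 by (simp add: power2_eq_square algebra_simps)
  have b0: "0 \<le> (z + c)^2" by simp
  have b: "- 2*c*z \<le> c^2 + z^2" using b0 by (simp add: power2_eq_square algebra_simps)
  have "K*(1 + (z - c*h)^2) \<le> K*(1 + 2*z^2 + 2*(c^2*h^2))" using a assms by (simp add: mult_left_mono)
  moreover have "0 \<le> K*c^2*h^2*z^2" "0 \<le> c^2*z^2" "0 \<le> z^2" using assms by simp_all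
  moreover have "(2 + c^2 + 2*K*(1 + c^2*h^2)) * (1 + z^2) = 2 + c^2 + 2*K + 2*K*c^2*h^2 + 2*z^2 + c^2*z^2 + 2*K*z^2 + 2*(K*c^2*h^2*z^2)"
    by (simp add: algebra_simps)
  moreover have "K*(1 + 2*z^2 + 2*(c^2*h^2)) = K + 2*K*z^2 + 2*K*c^2*h^2" by (simp add: algebra_simps)
  ultimately show ?thesis using b assms by linarith
qed

lemma final_arith:
  fixes wt \<gamma> \<delta> E \<epsilon> M X z A B :: real
  assumes lo: "wt \<ge> -\<gamma>*\<delta>*E + \<epsilon>*M*X*(1+z^2)"
    and hi: "wt \<le> \<delta>*E*A + \<epsilon>*X*B"
    and P: "\<gamma> + A < 0" and dE: "\<delta>*E > 0" and eX: "\<epsilon>*X > 0"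
    and Bb: "B \<le> M*(1+z^2)"
  shows False
proof -
  have "\<delta>*E*(\<gamma> + A) < 0" using dE P by (simp add: mult_pos_neg)
  moreover have "\<epsilon>*X*(B - M*(1+z^2)) \<le> 0" using eX Bb by (simp add: mult_nonneg_nonpos)
  ultimately show False using lo hi by (simp add: algebra_simps)
qed



lemma left_region:
  fixes w :: "real \<Rightarrow> real \<Rightarrow> real" and g \<phi> \<phi>' \<phi>2 :: "real \<Rightarrow> real"
  assumes sol: "classical_sol g h c (c * h) {0<..} w"
    and cont: "continuous_on ({-h..} \<times> UNIV) (\<lambda>(t, z). w t z)"
    and bdd: "\<And>t z. t \<ge> -h \<Longrightarrow> \<bar>w t z\<bar> \<le> B"
    and phd: "\<And>x. (\<phi> has_real_derivative \<phi>' x) (at x)"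
    and phd2: "\<And>x. (\<phi>' has_real_derivative \<phi>2 x) (at x)"
    and pheq: "\<And>x. \<phi>2 x - c * \<phi>' x - \<phi> x + g (\<phi> (x - c * h)) = 0"
    and phpos: "\<And>x. \<phi> x > 0"
    and h: "h \<ge> 0" and c: "c > 0" and R: "R > c * h"
    and \<delta>: "\<delta> > 0" and \<gamma>: "\<gamma> > 0" and lam: "lam > 0" and K: "K \<ge> 0"
    and gL: "\<And>a p. 0 \<le> a \<Longrightarrow> a \<le> \<delta> \<Longrightarrow> 0 \<le> p \<Longrightarrow> p \<le> \<delta> \<Longrightarrow> g a - g p \<le> K * max (a - p) 0"
    and P1: "\<gamma> + (lam^2 - c*lam - 1 + K * exp (\<gamma> * h) * exp (- lam * c * h)) < 0"
    and reg: "\<And>t z. t \<ge> -h \<Longrightarrow> z \<le> -R + c*h \<Longrightarrow> 0 \<le> w t z \<and> w t z \<le> \<delta> \<and> 0 \<le> \<phi> z \<and> \<phi> z \<le> \<delta>"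
    and init: "\<And>s z. s \<in> {-h..0} \<Longrightarrow> w s z \<le> \<phi> z + \<delta> * eta lam z"
    and mid: "\<And>t z. t \<ge> 0 \<Longrightarrow> z \<in> {-R - c*h..R + c*h} \<Longrightarrow> w t z \<le> \<phi> z"
  shows "\<And>t z. t \<ge> 0 \<Longrightarrow> z \<le> -R \<Longrightarrow> w t z \<le> \<phi> z + \<delta> * exp (lam * z) * exp (- \<gamma> * t)"
proof -
  define M where "M = 2 + c^2 + 2*K*(1 + c^2*h^2)"
  have M0: "M \<ge> 0" using K by (simp add: M_def)
  have B0: "B \<ge> 0" using bdd[of 0 0] h by linarith
  have cont': "continuous_on ({-h..} \<times> UNIV) (\<lambda>p. w (fst p) (snd p))"
    using cont by (simp add: case_prod_unfold)
  have phc: "continuous_on UNIV \<phi>"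
    using phd by (intro continuous_at_imp_continuous_on) (auto intro: DERIV_isCont)
  have Rpos: "R > 0" using R c h by (smt (verit) mult_nonneg_nonneg)
  have main: "\<phi> z + \<delta> * exp (lam * z) * exp (- \<gamma> * T) + \<epsilon> * exp (M * T) * (1 + z^2) - w T z \<ge> 0"
    if \<epsilon>: "\<epsilon> > 0" and T: "T \<ge> 0" and zR: "z \<le> -R" for \<epsilon> T z
  proof -
    define V where "V = (\<lambda>t z. w t z - \<phi> z - \<delta> * exp (lam * z) * exp (- \<gamma> * t) - \<epsilon> * exp (M * t) * (1 + z^2))"
    define Z where "Z = \<bar>R\<bar> + 1 + B / \<epsilon>"
    have Be: "B / \<epsilon> \<ge> 0" using \<epsilon> B0 by simp
    have ZR: "-Z < -R" using Be by (simp add: Z_def)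
    have far: "V t y < 0" if "t \<ge> 0" "y \<le> -Z" for t y
    proof -
      have Z1: "Z \<ge> 1" using Be by (simp add: Z_def)
      have "Z \<le> Z^2" using Z1 by (simp add: power2_eq_square)
      also have "Z^2 \<le> y^2" using that Z1 by (simp add: abs_le_square_iff[symmetric] abs_if) 
      finally have "B / \<epsilon> < 1 + y^2" by (simp add: Z_def)
      then have "B < \<epsilon> * (1 + y^2)" using \<epsilon> by (simp add: field_simps)
      also have "\<epsilon> * (1 + y^2) \<le> \<epsilon> * exp (M * t) * (1 + y^2)"
      proof -
        have ex1: "1 \<le> exp (M*t)" using M0 that by simp
        have "1 * (1 + y^2) \<le> exp (M*t) * (1 + y^2)" by (rule mult_right_mono[OF ex1]) simp
        then show ?thesis using \<epsilon> by (simp add: mult.assoc mult_left_mono)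
      qed
      finally have "B < \<epsilon> * exp (M * t) * (1 + y^2)" .
      moreover have "w t y \<le> B" using bdd[of t y] that h by simp
      moreover have "\<phi> y > 0" "\<delta> * exp (lam * y) * exp (- \<gamma> * t) > 0" using phpos \<delta> by auto
      ultimately show ?thesis by (simp add: V_def)
    qed
    have negcore: "\<forall>t\<in>{0..T}. \<forall>y\<in>{-Z..-R}. V t y < 0"
    proof (rule ccontr)
      assume "\<not> (\<forall>t\<in>{0..T}. \<forall>y\<in>{-Z..-R}. V t y < 0)"
      then obtain t1 y1 where t1: "t1 \<in> {0..T}" "y1 \<in> {-Z..-R}" "V t1 y1 \<ge> 0" by force
      have contV: "continuous_on ({0..T} \<times> {-Z..-R}) (\<lambda>p. V (fst p) (snd p))"
      proof -
        have sub: "{0..T} \<times> {-Z..-R} \<subseteq> {-h..} \<times> (UNIV::real set)" using h by auto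
        have c1: "continuous_on ({0..T} \<times> {-Z..-R}) (\<lambda>p. w (fst p) (snd p))"
          by (rule continuous_on_subset[OF cont' sub])
        have c2: "continuous_on ({0..T} \<times> {-Z..-R}) (\<lambda>p. \<phi> (snd p))"
          by (rule continuous_on_compose2[OF phc]) (auto intro: continuous_intros)
        show ?thesis unfolding V_def by (intro continuous_intros c1 c2)
      qed
      have bd: "V t (-Z) < 0 \<and> V t (-R) < 0" if "t \<in> {0..T}" for t
      proof
        show "V t (-Z) < 0" using far[of t "-Z"] that by simp
        have "w t (-R) \<le> \<phi> (-R)" using mid[of t "-R"] that Rpos c h by (simp add: mult_nonneg_nonneg)
        moreover have "\<delta> * exp (lam * (-R)) * exp (- \<gamma> * t) > 0" "\<epsilon> * exp (M * t) * (1 + (-R)^2) > 0"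
          using \<delta> \<epsilon> by (auto intro!: mult_pos_pos add_pos_nonneg)
        ultimately show "V t (-R) < 0" by (simp add: V_def)
      qed
      have iv: "V 0 y < 0" if "y \<in> {-Z..-R}" for y
      proof -
        have "w 0 y \<le> \<phi> y + \<delta> * eta lam y" using init[of 0 y] h by simp
        also have "\<delta> * eta lam y \<le> \<delta> * exp (lam * y)" using \<delta> by (simp add: eta_def)
        finally have "w 0 y \<le> \<phi> y + \<delta> * exp (lam * y)" by simp
        moreover have "\<epsilon> * (1 + y^2) > 0" using \<epsilon> by (simp add: add_pos_nonneg)
        ultimately show ?thesis by (simp add: V_def)
      qed
      obtain t0 z0 where t0: "0 < t0" "t0 \<le> T" and z0: "-Z < z0" "z0 < -R" and V0: "V t0 z0 = 0"
        and neg: "\<forall>t\<in>{0..<t0}. \<forall>y\<in>{-Z..-R}. V t y < 0" and le0: "\<forall>y\<in>{-Z..-R}. V t0 y \<le> 0"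
        using touch[OF contV bd iv t1] by blast
      have negall: "V t y < 0" if "t \<in> {0..<t0}" "y \<le> -R" for t y
        using neg that far[of t y] by (cases "y < -Z") auto
      have leall: "V t0 y \<le> 0" if "y \<le> -R" for y
        using le0 that far[of t0 y] t0 by (cases "y < -Z") auto
      have t0pos: "t0 \<in> {0<..}" using t0 by simp
      obtain dtd: "(\<lambda>s. w s z0) differentiable (at t0)"
        and dzd: "\<And>y. (\<lambda>y'. w t0 y') differentiable (at y)"
        and dzzd: "deriv (\<lambda>y'. w t0 y') differentiable (at z0)"
        and peq: "deriv (\<lambda>s. w s z0) t0 =
          deriv (deriv (\<lambda>y'. w t0 y')) z0 - c * deriv (\<lambda>y'. w t0 y') z0 - w t0 z0
          + g (w (t0 - h) (z0 - c * h))"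
        using sol t0pos unfolding classical_sol_def by blast
      define W' where "W' = deriv (\<lambda>y'. w t0 y')"
      define W2 where "W2 = deriv W' z0"
      define wt where "wt = deriv (\<lambda>s. w s z0) t0"
      define E where "E = exp (lam * z0) * exp (- \<gamma> * t0)"
      define X where "X = exp (M * t0)"
      have dW: "((\<lambda>y'. w t0 y') has_real_derivative W' y) (at y)" for y
        using dzd[of y] by (simp add: W'_def DERIV_deriv_iff_real_differentiable)
      have dW2: "(W' has_real_derivative W2) (at z0)"
        using dzzd by (simp add: W2_def W'_def DERIV_deriv_iff_real_differentiable)
      have dwt: "((\<lambda>s. w s z0) has_real_derivative wt) (at t0)"
        using dtd by (simp add: wt_def DERIV_deriv_iff_real_differentiable)
      define f' where "f' = (\<lambda>y. W' y - (\<phi>' y + \<delta> * (lam * exp (lam * y)) * exp (- \<gamma> * t0) + \<epsilon> * X * (2 * y)))"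
      define f2 where "f2 = W2 - (\<phi>2 z0 + \<delta> * (lam * (lam * exp (lam * z0))) * exp (- \<gamma> * t0) + \<epsilon> * X * 2)"
      have df: "((\<lambda>y. V t0 y) has_real_derivative f' y) (at y)" for y
        unfolding V_def f'_def X_def
        by (rule derivative_eq_intros dW phd refl | simp)+
      have df2: "(f' has_real_derivative f2) (at z0)"
        unfolding f'_def f2_def
        by (rule derivative_eq_intros dW2 phd2 refl | simp)+
      have mx: "V t0 y \<le> V t0 z0" if "\<bar>z0 - y\<bar> < -R - z0" for y
        using leall[of y] that V0 by simp
      have "f' z0 = 0 \<and> f2 \<le> 0"
        by (rule max2[OF df df2, of "-R - z0"]) (use z0 mx in auto)
      then have f'0: "f' z0 = 0" and f20: "f2 \<le> 0" by auto
      define l where "l = wt - (\<delta> * exp (lam * z0) * (exp (- \<gamma> * t0) * (- \<gamma>)) + \<epsilon> * (exp (M * t0) * M) * (1 + z0^2))"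
      have dl: "((\<lambda>s. V s z0) has_real_derivative l) (at t0)"
        unfolding V_def l_def
        by (rule derivative_eq_intros dwt refl | simp)+
      have l0: "l \<ge> 0"
      proof (rule time_max[OF dl t0(1)])
        fix h' :: real assume "0 < h'" "h' < t0"
        then have "t0 - h' \<in> {0..<t0}" by simp
        then show "V (t0 - h') z0 \<le> V t0 z0" using negall[of "t0 - h'" z0] z0 V0 by simp
      qed
      define a where "a = w (t0 - h) (z0 - c * h)"
      define p where "p = \<phi> (z0 - c * h)"
      define D where "D = \<delta> * exp (lam * (z0 - c * h)) * exp (- \<gamma> * (t0 - h)) + \<epsilon> * exp (M * (t0 - h)) * (1 + (z0 - c * h)^2)"
      have ch0: "c * h \<ge> 0" using c h by simp
      have zch: "z0 - c * h \<le> -R" using z0 ch0 by simp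
      have adp: "a \<le> p + D"
      proof (cases "t0 - h \<ge> 0")
        case True
        have "V (t0 - h) (z0 - c * h) \<le> 0"
        proof (cases "h = 0")
          case True then show ?thesis using leall[OF zch] by simp
        next
          case False
          then have "t0 - h \<in> {0..<t0}" using \<open>t0 - h \<ge> 0\<close> h by simp
          then show ?thesis using negall[OF _ zch] by fastforce
        qed
        then show ?thesis by (simp add: V_def a_def p_def D_def)
      next
        case False
        then have s: "t0 - h \<in> {-h..0}" using t0 by simp
        have "a \<le> p + \<delta> * eta lam (z0 - c * h)" using init[OF s] by (simp add: a_def p_def)
        also have "\<delta> * eta lam (z0 - c * h) \<le> \<delta> * exp (lam * (z0 - c * h))" using \<delta> by (simp add: eta_def)
        also have "\<delta> * exp (lam * (z0 - c * h)) \<le> \<delta> * exp (lam * (z0 - c * h)) * exp (- \<gamma> * (t0 - h))"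
        proof -
          have "\<gamma> * (t0 - h) \<le> 0" using False \<gamma> by (simp add: mult_nonneg_nonpos)
          then have "1 \<le> exp (- \<gamma> * (t0 - h))" by simp
          moreover have "\<delta> * exp (lam * (z0 - c * h)) > 0" using \<delta> by simp
          ultimately show ?thesis using mult_left_mono[of 1 "exp (- \<gamma> * (t0 - h))" "\<delta> * exp (lam * (z0 - c * h))"] by simp
        qed
        also have "\<delta> * exp (lam * (z0 - c * h)) * exp (- \<gamma> * (t0 - h)) \<le> D"
          using \<epsilon> by (simp add: D_def)
        finally show ?thesis by simp
      qed
      have D0: "D \<ge> 0" using \<delta> \<epsilon> by (simp add: D_def add_nonneg_nonneg)
      have rg: "0 \<le> a \<and> a \<le> \<delta> \<and> 0 \<le> p \<and> p \<le> \<delta>"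
        using reg[of "t0 - h" "z0 - c * h"] t0 ch0 zch by (simp add: a_def p_def)
      have "g a - g p \<le> K * max (a - p) 0" using gL rg by blast
      also have "\<dots> \<le> K * D" using adp D0 K by (simp add: mult_left_mono)
      finally have ga1: "g a - g p \<le> K * D" .
      define eg where "eg = exp (\<gamma> * h)"
      define el where "el = exp (- lam * c * h)"
      have e1: "exp (lam * (z0 - c * h)) * exp (- \<gamma> * (t0 - h)) = E * (eg * el)"
        by (simp add: E_def eg_def el_def mult_exp_exp algebra_simps)
      have e2: "exp (M * (t0 - h)) = X * exp (- M * h)"
        by (simp add: X_def mult_exp_exp algebra_simps)
      have e3: "exp (- M * h) \<le> 1" using M0 h by (simp add: mult_nonneg_nonneg)
      have X0: "X > 0" by (simp add: X_def)
      have "\<epsilon> * exp (M * (t0 - h)) * (1 + (z0 - c * h)^2) \<le> \<epsilon> * X * (1 + (z0 - c * h)^2)"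
      proof -
        have "X * exp (- M * h) \<le> X * 1" using e3 X0 by (intro mult_left_mono) auto
        then have "\<epsilon> * (X * exp (- M * h)) * (1 + (z0 - c * h)^2) \<le> \<epsilon> * (X * 1) * (1 + (z0 - c * h)^2)"
          using \<epsilon> X0 M0 h by (intro mult_right_mono mult_left_mono) (auto simp: add_nonneg_nonneg)
        then show ?thesis by (simp add: e2)
      qed
      then have "D \<le> \<delta> * E * (eg * el) + \<epsilon> * X * (1 + (z0 - c * h)^2)"
        unfolding D_def using e1 by (simp add: mult.assoc)
      then have "K * D \<le> K * (\<delta> * E * (eg * el) + \<epsilon> * X * (1 + (z0 - c * h)^2))"
        using K by (simp add: mult_left_mono)
      with ga1 have ga: "g a - g p \<le> K * \<delta> * E * eg * el + \<epsilon> * X * (K * (1 + (z0 - c * h)^2))"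
        by (simp add: algebra_simps)
      have gp: "g p = c * \<phi>' z0 + \<phi> z0 - \<phi>2 z0" using pheq[of z0] by (simp add: p_def)
      have W'z: "W' z0 = \<phi>' z0 + \<delta> * lam * E + \<epsilon> * X * (2 * z0)"
        using f'0 by (simp add: f'_def E_def algebra_simps)
      have W2z: "W2 \<le> \<phi>2 z0 + \<delta> * lam^2 * E + \<epsilon> * X * 2"
        using f20 by (simp add: f2_def E_def power2_eq_square algebra_simps)
      have wv: "w t0 z0 = \<phi> z0 + \<delta> * E + \<epsilon> * X * (1 + z0^2)"
        using V0 by (simp add: V_def E_def X_def algebra_simps)
      have wteq: "wt = W2 - c * W' z0 - w t0 z0 + g a"
        using peq by (simp add: wt_def W2_def W'_def a_def)
      have hi0: "wt \<le> (\<phi>2 z0 + \<delta> * lam^2 * E + \<epsilon> * X * 2) - c * (\<phi>' z0 + \<delta> * lam * E + \<epsilon> * X * (2 * z0))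
          - (\<phi> z0 + \<delta> * E + \<epsilon> * X * (1 + z0^2)) + (c * \<phi>' z0 + \<phi> z0 - \<phi>2 z0)
          + (K * \<delta> * E * eg * el + \<epsilon> * X * (K * (1 + (z0 - c * h)^2)))"
        using wteq W'z W2z wv ga gp by simp
      define A where "A = lam^2 - c*lam - 1 + K * eg * el"
      define Bq where "Bq = 1 - 2*c*z0 - z0^2 + K*(1 + (z0 - c*h)^2)"
      have hi: "wt \<le> \<delta> * E * A + \<epsilon> * X * Bq"
        using hi0 by (simp add: A_def Bq_def algebra_simps)
      have lo: "wt \<ge> -\<gamma>*\<delta>*E + \<epsilon>*M*X*(1+z0^2)"
        using l0 by (simp add: l_def E_def X_def algebra_simps)
      have PA: "\<gamma> + A < 0" using P1 by (simp add: A_def eg_def el_def mult.assoc)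
      have dE: "\<delta> * E > 0" using \<delta> by (simp add: E_def)
      have eX: "\<epsilon> * X > 0" using \<epsilon> X0 by simp
      have Bb: "Bq \<le> M * (1 + z0^2)" unfolding Bq_def M_def by (rule bracket_le[OF K])
      show False by (rule final_arith[OF lo hi PA dE eX Bb])
    qed
    have "V T z \<le> 0"
    proof (cases "z < -Z")
      case True then show ?thesis using far[of T z] T by simp
    next
      case False
      then have "z \<in> {-Z..-R}" "T \<in> {0..T}" using zR T by auto
      then show ?thesis using negcore by fastforce
    qed
    then show ?thesis by (simp add: V_def)
  qed
  fix t z :: real assume t: "t \<ge> 0" and z: "z \<le> -R"
  show "w t z \<le> \<phi> z + \<delta> * exp (lam * z) * exp (- \<gamma> * t)"
  proof (rule field_le_epsilon)
    fix e :: real assume e: "e > 0"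
    define \<epsilon> where "\<epsilon> = e / (exp (M * t) * (1 + z^2))"
    have "\<epsilon> > 0" using e by (simp add: \<epsilon>_def add_pos_nonneg)
    from main[OF this t z] have "w t z \<le> \<phi> z + \<delta> * exp (lam * z) * exp (- \<gamma> * t) + \<epsilon> * exp (M * t) * (1 + z^2)" by simp
    moreover have "\<epsilon> * exp (M * t) * (1 + z^2) = e"
    proof -
      have "1 + z^2 \<noteq> 0" by (smt (verit) zero_le_power2)
      then show ?thesis by (simp add: \<epsilon>_def)
    qed
    ultimately show "w t z \<le> \<phi> z + \<delta> * exp (lam * z) * exp (- \<gamma> * t) + e" by simp
  qed
qed



lemma right_region:
  fixes w :: "real \<Rightarrow> real \<Rightarrow> real" and g \<phi> \<phi>' \<phi>2 :: "real \<Rightarrow> real"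
  assumes sol: "classical_sol g h c (c * h) {0<..} w"
    and cont: "continuous_on ({-h..} \<times> UNIV) (\<lambda>(t, z). w t z)"
    and bdd: "\<And>t z. t \<ge> -h \<Longrightarrow> \<bar>w t z\<bar> \<le> B"
    and phd: "\<And>x. (\<phi> has_real_derivative \<phi>' x) (at x)"
    and phd2: "\<And>x. (\<phi>' has_real_derivative \<phi>2 x) (at x)"
    and pheq: "\<And>x. \<phi>2 x - c * \<phi>' x - \<phi> x + g (\<phi> (x - c * h)) = 0"
    and phpos: "\<And>x. \<phi> x > 0"
    and h: "h \<ge> 0" and c: "c > 0" and R: "R > c * h"
    and \<delta>: "\<delta> > 0" and \<gamma>: "\<gamma> > 0" and K: "K \<ge> 0"
    and gR: "\<And>a p. \<kappa> - \<delta> < a \<Longrightarrow> a < \<kappa> + \<delta> \<Longrightarrow> \<kappa> - \<delta> < p \<Longrightarrow> p < \<kappa> + \<delta> \<Longrightarrow> g a - g p \<le> K * max (a - p) 0"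
    and P2: "\<gamma> + (- 1 + K * exp (\<gamma> * h)) < 0"
    and reg: "\<And>t z. t \<ge> -h \<Longrightarrow> z \<ge> R - c*h \<Longrightarrow> \<bar>w t z - \<kappa>\<bar> < \<delta> \<and> \<bar>\<phi> z - \<kappa>\<bar> < \<delta>"
    and init: "\<And>s z. s \<in> {-h..0} \<Longrightarrow> w s z \<le> \<phi> z + \<delta> * eta lam z"
    and mid: "\<And>t z. t \<ge> 0 \<Longrightarrow> z \<in> {-R - c*h..R + c*h} \<Longrightarrow> w t z \<le> \<phi> z"
  shows "\<And>t z. t \<ge> 0 \<Longrightarrow> z \<ge> R \<Longrightarrow> w t z \<le> \<phi> z + \<delta> * exp (- \<gamma> * t)"
proof -
  define M where "M = 2 + c^2 + 2*K*(1 + c^2*h^2)"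
  have M0: "M \<ge> 0" using K by (simp add: M_def)
  have B0: "B \<ge> 0" using bdd[of 0 0] h by linarith
  have cont': "continuous_on ({-h..} \<times> UNIV) (\<lambda>p. w (fst p) (snd p))"
    using cont by (simp add: case_prod_unfold)
  have phc: "continuous_on UNIV \<phi>"
    using phd by (intro continuous_at_imp_continuous_on) (auto intro: DERIV_isCont)
  have Rpos: "R > 0" using R c h by (smt (verit) mult_nonneg_nonneg)
  have etal: "eta lam y \<le> 1" for y by (simp add: eta_def)
  have main: "\<phi> z + \<delta> * exp (- \<gamma> * T) + \<epsilon> * exp (M * T) * (1 + z^2) - w T z \<ge> 0"
    if \<epsilon>: "\<epsilon> > 0" and T: "T \<ge> 0" and zR: "z \<ge> R" for \<epsilon> T z
  proof -
    define V where "V = (\<lambda>t z. w t z - \<phi> z - \<delta> * exp (- \<gamma> * t) - \<epsilon> * exp (M * t) * (1 + z^2))"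
    define Z where "Z = \<bar>R\<bar> + 1 + B / \<epsilon>"
    have Be: "B / \<epsilon> \<ge> 0" using \<epsilon> B0 by simp
    have ZR: "R < Z" using Be by (simp add: Z_def)
    have far: "V t y < 0" if "t \<ge> 0" "y \<ge> Z" for t y
    proof -
      have Z1: "Z \<ge> 1" using Be by (simp add: Z_def)
      have "Z \<le> Z^2" using Z1 by (simp add: power2_eq_square)
      also have "Z^2 \<le> y^2" using that Z1 by (simp add: abs_le_square_iff[symmetric] abs_if) 
      finally have "B / \<epsilon> < 1 + y^2" by (simp add: Z_def)
      then have "B < \<epsilon> * (1 + y^2)" using \<epsilon> by (simp add: field_simps)
      also have "\<epsilon> * (1 + y^2) \<le> \<epsilon> * exp (M * t) * (1 + y^2)"
      proof -
        have ex1: "1 \<le> exp (M*t)" using M0 that by simp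
        have "1 * (1 + y^2) \<le> exp (M*t) * (1 + y^2)" by (rule mult_right_mono[OF ex1]) simp
        then show ?thesis using \<epsilon> by (simp add: mult.assoc mult_left_mono)
      qed
      finally have "B < \<epsilon> * exp (M * t) * (1 + y^2)" .
      moreover have "w t y \<le> B" using bdd[of t y] that h by simp
      moreover have "\<phi> y > 0" "\<delta> * exp (- \<gamma> * t) > 0" using phpos \<delta> by auto
      ultimately show ?thesis by (simp add: V_def)
    qed
    have negcore: "\<forall>t\<in>{0..T}. \<forall>y\<in>{R..Z}. V t y < 0"
    proof (rule ccontr)
      assume "\<not> (\<forall>t\<in>{0..T}. \<forall>y\<in>{R..Z}. V t y < 0)"
      then obtain t1 y1 where t1: "t1 \<in> {0..T}" "y1 \<in> {R..Z}" "V t1 y1 \<ge> 0" by force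
      have contV: "continuous_on ({0..T} \<times> {R..Z}) (\<lambda>p. V (fst p) (snd p))"
      proof -
        have sub: "{0..T} \<times> {R..Z} \<subseteq> {-h..} \<times> (UNIV::real set)" using h by auto
        have c1: "continuous_on ({0..T} \<times> {R..Z}) (\<lambda>p. w (fst p) (snd p))"
          by (rule continuous_on_subset[OF cont' sub])
        have c2: "continuous_on ({0..T} \<times> {R..Z}) (\<lambda>p. \<phi> (snd p))"
          by (rule continuous_on_compose2[OF phc]) (auto intro: continuous_intros)
        show ?thesis unfolding V_def by (intro continuous_intros c1 c2)
      qed
      have bd: "V t R < 0 \<and> V t Z < 0" if "t \<in> {0..T}" for t
      proof
        show "V t Z < 0" using far[of t "Z"] that by simp
        have "c * h \<ge> 0" using c h by simp
        then have "w t R \<le> \<phi> R" using mid[of t "R"] that Rpos by simp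
        moreover have "\<delta> * exp (- \<gamma> * t) > 0" "\<epsilon> * exp (M * t) * (1 + R^2) > 0"
          using \<delta> \<epsilon> by (auto intro!: mult_pos_pos add_pos_nonneg)
        ultimately show "V t R < 0" by (simp add: V_def)
      qed
      have iv: "V 0 y < 0" if "y \<in> {R..Z}" for y
      proof -
        have "w 0 y \<le> \<phi> y + \<delta> * eta lam y" using init[of 0 y] h by simp
        also have "\<delta> * eta lam y \<le> \<delta>" using \<delta> etal[of y] by simp
        finally have "w 0 y \<le> \<phi> y + \<delta>" by simp
        moreover have "\<epsilon> * (1 + y^2) > 0" using \<epsilon> by (simp add: add_pos_nonneg)
        ultimately show ?thesis by (simp add: V_def)
      qed
      obtain t0 z0 where t0: "0 < t0" "t0 \<le> T" and z0: "R < z0" "z0 < Z" and V0: "V t0 z0 = 0"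
        and neg: "\<forall>t\<in>{0..<t0}. \<forall>y\<in>{R..Z}. V t y < 0" and le0: "\<forall>y\<in>{R..Z}. V t0 y \<le> 0"
        using touch[OF contV bd iv t1] by blast
      have negall: "V t y < 0" if "t \<in> {0..<t0}" "y \<ge> R" for t y
        using neg that far[of t y] by (cases "y > Z") auto
      have leall: "V t0 y \<le> 0" if "y \<ge> R" for y
        using le0 that far[of t0 y] t0 by (cases "y > Z") auto
      have t0pos: "t0 \<in> {0<..}" using t0 by simp
      obtain dtd: "(\<lambda>s. w s z0) differentiable (at t0)"
        and dzd: "\<And>y. (\<lambda>y'. w t0 y') differentiable (at y)"
        and dzzd: "deriv (\<lambda>y'. w t0 y') differentiable (at z0)"
        and peq: "deriv (\<lambda>s. w s z0) t0 =
          deriv (deriv (\<lambda>y'. w t0 y')) z0 - c * deriv (\<lambda>y'. w t0 y') z0 - w t0 z0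
          + g (w (t0 - h) (z0 - c * h))"
        using sol t0pos unfolding classical_sol_def by blast
      define W' where "W' = deriv (\<lambda>y'. w t0 y')"
      define W2 where "W2 = deriv W' z0"
      define wt where "wt = deriv (\<lambda>s. w s z0) t0"
      define E where "E = exp (- \<gamma> * t0)"
      define X where "X = exp (M * t0)"
      have dW: "((\<lambda>y'. w t0 y') has_real_derivative W' y) (at y)" for y
        using dzd[of y] by (simp add: W'_def DERIV_deriv_iff_real_differentiable)
      have dW2: "(W' has_real_derivative W2) (at z0)"
        using dzzd by (simp add: W2_def W'_def DERIV_deriv_iff_real_differentiable)
      have dwt: "((\<lambda>s. w s z0) has_real_derivative wt) (at t0)"
        using dtd by (simp add: wt_def DERIV_deriv_iff_real_differentiable)
      define f' where "f' = (\<lambda>y. W' y - (\<phi>' y + \<epsilon> * X * (2 * y)))"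
      define f2 where "f2 = W2 - (\<phi>2 z0 + \<epsilon> * X * 2)"
      have df: "((\<lambda>y. V t0 y) has_real_derivative f' y) (at y)" for y
        unfolding V_def f'_def X_def
        by (rule derivative_eq_intros dW phd refl | simp)+
      have df2: "(f' has_real_derivative f2) (at z0)"
        unfolding f'_def f2_def
        by (rule derivative_eq_intros dW2 phd2 refl | simp)+
      have mx: "V t0 y \<le> V t0 z0" if "\<bar>z0 - y\<bar> < z0 - R" for y
        using leall[of y] that V0 by simp
      have "f' z0 = 0 \<and> f2 \<le> 0"
        by (rule max2[OF df df2, of "z0 - R"]) (use z0 mx in auto)
      then have f'0: "f' z0 = 0" and f20: "f2 \<le> 0" by auto
      define l where "l = wt - (\<delta> * (exp (- \<gamma> * t0) * (- \<gamma>)) + \<epsilon> * (exp (M * t0) * M) * (1 + z0^2))"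
      have dl: "((\<lambda>s. V s z0) has_real_derivative l) (at t0)"
        unfolding V_def l_def
        by (rule derivative_eq_intros dwt refl | simp)+
      have l0: "l \<ge> 0"
      proof (rule time_max[OF dl t0(1)])
        fix h' :: real assume "0 < h'" "h' < t0"
        then have "t0 - h' \<in> {0..<t0}" by simp
        then show "V (t0 - h') z0 \<le> V t0 z0" using negall[of "t0 - h'" z0] z0 V0 by simp
      qed
      define a where "a = w (t0 - h) (z0 - c * h)"
      define p where "p = \<phi> (z0 - c * h)"
      define D where "D = \<delta> * exp (- \<gamma> * (t0 - h)) + \<epsilon> * exp (M * (t0 - h)) * (1 + (z0 - c * h)^2)"
      have ch0: "c * h \<ge> 0" using c h by simp
      have zch: "z0 - c * h \<ge> R - c * h" using z0 by simp
      have D0: "D \<ge> 0" using \<delta> \<epsilon> by (simp add: D_def add_nonneg_nonneg)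
      have adp: "a \<le> p + D"
      proof (cases "t0 - h \<ge> 0")
        case True
        show ?thesis
        proof (cases "z0 - c * h \<ge> R")
          case zR: True
          have "V (t0 - h) (z0 - c * h) \<le> 0"
          proof (cases "h = 0")
            case True then show ?thesis using leall[OF zR] by simp
          next
            case False
            then have "t0 - h \<in> {0..<t0}" using \<open>t0 - h \<ge> 0\<close> h by simp
            then show ?thesis using negall[OF _ zR] by fastforce
          qed
          then show ?thesis by (simp add: V_def a_def p_def D_def)
        next
          case False
          then have "z0 - c * h \<in> {-R - c*h..R + c*h}" using z0 Rpos ch0 by simp
          then have "a \<le> p" using mid[OF True] by (simp add: a_def p_def)
          then show ?thesis using D0 by simp
        qed
      next
        case False
        then have s: "t0 - h \<in> {-h..0}" using t0 by simp
        have "a \<le> p + \<delta> * eta lam (z0 - c * h)" using init[OF s] by (simp add: a_def p_def)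
        also have "\<delta> * eta lam (z0 - c * h) \<le> \<delta>" using \<delta> etal by simp
        also have "\<delta> \<le> \<delta> * exp (- \<gamma> * (t0 - h))"
        proof -
          have "\<gamma> * (t0 - h) \<le> 0" using False \<gamma> by (simp add: mult_nonneg_nonpos)
          then have "1 \<le> exp (- \<gamma> * (t0 - h))" by simp
          then show ?thesis using mult_left_mono[of 1 "exp (- \<gamma> * (t0 - h))" \<delta>] \<delta> by simp
        qed
        also have "\<delta> * exp (- \<gamma> * (t0 - h)) \<le> D"
          using \<epsilon> by (simp add: D_def)
        finally show ?thesis by simp
      qed
      have rg: "\<bar>a - \<kappa>\<bar> < \<delta> \<and> \<bar>p - \<kappa>\<bar> < \<delta>"
        using reg[of "t0 - h" "z0 - c * h"] t0 zch by (simp add: a_def p_def)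
      have "g a - g p \<le> K * max (a - p) 0" using gR rg by (simp add: abs_less_iff)
      also have "\<dots> \<le> K * D" using adp D0 K by (simp add: mult_left_mono)
      finally have ga1: "g a - g p \<le> K * D" .
      define eg where "eg = exp (\<gamma> * h)"
      have e1: "exp (- \<gamma> * (t0 - h)) = E * eg"
        by (simp add: E_def eg_def mult_exp_exp algebra_simps)
      have e2: "exp (M * (t0 - h)) = X * exp (- M * h)"
        by (simp add: X_def mult_exp_exp algebra_simps)
      have e3: "exp (- M * h) \<le> 1" using M0 h by (simp add: mult_nonneg_nonneg)
      have X0: "X > 0" by (simp add: X_def)
      have "\<epsilon> * exp (M * (t0 - h)) * (1 + (z0 - c * h)^2) \<le> \<epsilon> * X * (1 + (z0 - c * h)^2)"
      proof -
        have "X * exp (- M * h) \<le> X * 1" using e3 X0 by (intro mult_left_mono) auto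
        then have "\<epsilon> * (X * exp (- M * h)) * (1 + (z0 - c * h)^2) \<le> \<epsilon> * (X * 1) * (1 + (z0 - c * h)^2)"
          using \<epsilon> X0 M0 h by (intro mult_right_mono mult_left_mono) (auto simp: add_nonneg_nonneg)
        then show ?thesis by (simp add: e2)
      qed
      then have "D \<le> \<delta> * E * eg + \<epsilon> * X * (1 + (z0 - c * h)^2)"
        unfolding D_def using e1 by (simp add: mult.assoc)
      then have "K * D \<le> K * (\<delta> * E * eg + \<epsilon> * X * (1 + (z0 - c * h)^2))"
        using K by (simp add: mult_left_mono)
      with ga1 have ga: "g a - g p \<le> K * \<delta> * E * eg + \<epsilon> * X * (K * (1 + (z0 - c * h)^2))"
        by (simp add: algebra_simps)
      have gp: "g p = c * \<phi>' z0 + \<phi> z0 - \<phi>2 z0" using pheq[of z0] by (simp add: p_def)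
      have W'z: "W' z0 = \<phi>' z0 + \<epsilon> * X * (2 * z0)"
        using f'0 by (simp add: f'_def algebra_simps)
      have W2z: "W2 \<le> \<phi>2 z0 + \<epsilon> * X * 2"
        using f20 by (simp add: f2_def algebra_simps)
      have wv: "w t0 z0 = \<phi> z0 + \<delta> * E + \<epsilon> * X * (1 + z0^2)"
        using V0 by (simp add: V_def E_def X_def algebra_simps)
      have wteq: "wt = W2 - c * W' z0 - w t0 z0 + g a"
        using peq by (simp add: wt_def W2_def W'_def a_def)
      have hi0: "wt \<le> (\<phi>2 z0 + \<epsilon> * X * 2) - c * (\<phi>' z0 + \<epsilon> * X * (2 * z0))
          - (\<phi> z0 + \<delta> * E + \<epsilon> * X * (1 + z0^2)) + (c * \<phi>' z0 + \<phi> z0 - \<phi>2 z0)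
          + (K * \<delta> * E * eg + \<epsilon> * X * (K * (1 + (z0 - c * h)^2)))"
        using wteq W'z W2z wv ga gp by simp
      define A where "A = - 1 + K * eg"
      define Bq where "Bq = 1 - 2*c*z0 - z0^2 + K*(1 + (z0 - c*h)^2)"
      have hi: "wt \<le> \<delta> * E * A + \<epsilon> * X * Bq"
        using hi0 by (simp add: A_def Bq_def algebra_simps)
      have lo: "wt \<ge> -\<gamma>*\<delta>*E + \<epsilon>*M*X*(1+z0^2)"
        using l0 by (simp add: l_def E_def X_def algebra_simps)
      have PA: "\<gamma> + A < 0" using P2 by (simp add: A_def eg_def)
      have dE: "\<delta> * E > 0" using \<delta> by (simp add: E_def)
      have eX: "\<epsilon> * X > 0" using \<epsilon> X0 by simp
      have Bb: "Bq \<le> M * (1 + z0^2)" unfolding Bq_def M_def by (rule bracket_le[OF K])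
      show False by (rule final_arith[OF lo hi PA dE eX Bb])
    qed
    have "V T z \<le> 0"
    proof (cases "z > Z")
      case True then show ?thesis using far[of T z] T by simp
    next
      case False
      then have "z \<in> {R..Z}" "T \<in> {0..T}" using zR T by auto
      then show ?thesis using negcore by fastforce
    qed
    then show ?thesis by (simp add: V_def)
  qed
  fix t z :: real assume t: "t \<ge> 0" and z: "z \<ge> R"
  show "w t z \<le> \<phi> z + \<delta> * exp (- \<gamma> * t)"
  proof (rule field_le_epsilon)
    fix e :: real assume e: "e > 0"
    define \<epsilon> where "\<epsilon> = e / (exp (M * t) * (1 + z^2))"
    have "\<epsilon> > 0" using e by (simp add: \<epsilon>_def add_pos_nonneg)
    from main[OF this t z] have "w t z \<le> \<phi> z + \<delta> * exp (- \<gamma> * t) + \<epsilon> * exp (M * t) * (1 + z^2)" by simp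
    moreover have "\<epsilon> * exp (M * t) * (1 + z^2) = e"
    proof -
      have "1 + z^2 \<noteq> 0" by (smt (verit) zero_le_power2)
      then show ?thesis by (simp add: \<epsilon>_def)
    qed
    ultimately show "w t z \<le> \<phi> z + \<delta> * exp (- \<gamma> * t) + e" by simp
  qed
qed



theorem lemma2:
  fixes g :: "real \<Rightarrow> real" and \<kappa> h c lam :: real and \<phi> :: "real \<Rightarrow> real"
  assumes H: "hypH g \<kappa>"
    and mono: "mono_on {0..} g"
    and h: "h \<ge> 0"
    and c: "c = c_star g \<kappa> h" "c > c_sharp g h"
    and front: "wavefront g \<kappa> h c \<phi>"
    and lam: "lambda1 g h c < lam" "lam < lambda2 g h c"
  shows "\<exists>\<gamma>>0. \<exists>\<delta>>0. \<forall>(w :: real \<Rightarrow> real \<Rightarrow> real) R.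
     ( classical_sol g h c (c * h) {0<..} w
     \<and> continuous_on ({-h..} \<times> UNIV) (\<lambda>(t, z). w t z)
     \<and> bounded ((\<lambda>(t, z). w t z) ` ({-h..} \<times> UNIV))
     \<and> (\<forall>s\<in>{-h..0}. \<forall>z. 0 \<le> w s z \<and> w s z \<le> \<kappa>)
     \<and> (\<forall>z0. \<exists>r>0. \<exists>K \<alpha>. 0 < \<alpha> \<and> \<alpha> \<le> 1 \<and>
           (\<forall>s\<in>{-h..0}. \<forall>y\<in>ball z0 r. \<forall>z\<in>ball z0 r.
               \<bar>w s y - w s z\<bar> \<le> K * \<bar>y - z\<bar> powr \<alpha>))
     \<and> R > c * h
     \<and> (\<forall>t\<ge>-h. \<forall>z\<le>-R + c * h. 0 \<le> w t z \<and> w t z \<le> \<delta> \<and> 0 \<le> \<phi> z \<and> \<phi> z \<le> \<delta>)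
     \<and> (\<forall>t\<ge>-h. \<forall>z\<ge>R - c * h. \<bar>w t z - \<kappa>\<bar> < \<delta> \<and> \<bar>\<phi> z - \<kappa>\<bar> < \<delta>)
     \<and> (\<forall>s\<in>{-h..0}. \<forall>z. w s z \<le> \<phi> z + \<delta> * eta lam z)
     \<and> (\<forall>t\<ge>0. \<forall>z\<in>{-R - c * h..R + c * h}. w t z \<le> \<phi> z)
     \<longrightarrow> (\<forall>t\<ge>0. \<forall>z. w t z \<le> \<phi> z + \<delta> * eta lam z * exp (- \<gamma> * t)))"
proof -
  define d0 where "d0 = deriv g 0"
  define d1 where "d1 = deriv g \<kappa>"
  have k0: "\<kappa> > 0" using H unfolding hypH_def by (elim conjE) assumption
  have Hx: "\<exists>\<delta>0 > 0. C1_near g 0 \<delta>0 \<and> C1_near g \<kappa> \<delta>0 \<and>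
        (\<exists>C > 0. \<exists>\<theta>. 0 < \<theta> \<and> \<theta> \<le> 1 \<and>
           (\<forall>u. 0 < u \<and> u \<le> \<delta>0 \<longrightarrow>
              \<bar>deriv g u - deriv g 0\<bar> + \<bar>deriv g \<kappa> - deriv g (\<kappa> - u)\<bar> \<le> C * u powr \<theta>))"
    using H unfolding hypH_def by (elim conjE) assumption
  have d0g: "d0 > 1" using H unfolding hypH_def d0_def by (elim conjE) assumption
  have d1l: "d1 < 1" using H unfolding hypH_def d1_def by (elim conjE) assumption
  have lin0: "\<forall>x\<ge>\<kappa>. g x = \<kappa> + deriv g \<kappa> * (x - \<kappa>)" using H unfolding hypH_def by (elim conjE) assumption
  then have lin: "\<And>x. x \<ge> \<kappa> \<Longrightarrow> g x = \<kappa> + d1 * (x - \<kappa>)" by (simp add: d1_def)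
  from Hx obtain \<delta>0 C \<theta> where \<delta>0: "\<delta>0 > 0" and C10: "C1_near g 0 \<delta>0" and C1k: "C1_near g \<kappa> \<delta>0"
    and Cpos: "C > 0" and th: "0 < \<theta>" "\<theta> \<le> 1"
    and bnd0: "\<forall>u. 0 < u \<and> u \<le> \<delta>0 \<longrightarrow>
              \<bar>deriv g u - deriv g 0\<bar> + \<bar>deriv g \<kappa> - deriv g (\<kappa> - u)\<bar> \<le> C * u powr \<theta>"
    by blast
  have bnd: "\<And>u. 0 < u \<Longrightarrow> u \<le> \<delta>0 \<Longrightarrow> \<bar>deriv g u - d0\<bar> + \<bar>d1 - deriv g (\<kappa> - u)\<bar> \<le> C * u powr \<theta>"
    using bnd0 by (simp add: d0_def d1_def)
  have d1g: "d1 \<ge> 0"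
  proof -
    have "g \<kappa> \<le> g (\<kappa> + 1)" using mono k0 by (intro mono_onD[OF mono]) auto
    then show ?thesis using lin[of \<kappa>] lin[of "\<kappa>+1"] by simp
  qed
  have gdiff0: "(g has_real_derivative deriv g x) (at x)" if "\<bar>x\<bar> < \<delta>0" for x
    using C10 that unfolding C1_near_def by (simp add: DERIV_deriv_iff_real_differentiable dist_real_def)
  have gdiffk: "(g has_real_derivative deriv g x) (at x)" if "\<bar>x - \<kappa>\<bar> < \<delta>0" for x
    using C1k that unfolding C1_near_def by (simp add: DERIV_deriv_iff_real_differentiable dist_real_def abs_minus_commute)
  have chl: "chi g h lam c < 0 \<and> lam > 0" using chi_neg[OF lam] d0g by (simp add: d0_def)
  then have chn: "lam^2 - c*lam - 1 + d0 * exp (- lam * c * h) < 0" and lpos: "lam > 0"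
    by (auto simp: chi_def d0_def)
  have cpos: "c > 0"
  proof (rule ccontr)
    assume "\<not> c > 0"
    then have c0: "c \<le> 0" by simp
    have lc: "lam * c \<le> 0" using lpos c0 by (simp add: mult_nonneg_nonpos)
    have "lam * c * h \<le> 0" using lc h by (rule mult_nonpos_nonneg)
    then have "- c * lam \<ge> 0" "- lam * c * h \<ge> 0" using lc by (simp_all add: mult.commute)
    then have "exp (- lam * c * h) \<ge> 1" by simp
    then have "d0 * exp (- lam * c * h) \<ge> d0" using d0g by simp
    moreover have "lam^2 \<ge> 0" by simp
    ultimately show False using chn \<open>- c * lam \<ge> 0\<close> d0g by linarith
  qed
  define el where "el = exp (- lam * c * h)"
  have el0: "el > 0" by (simp add: el_def)
  define chv where "chv = lam^2 - c*lam - 1 + d0 * el"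
  have chn': "chv < 0" unfolding chv_def el_def by (rule chn)
  define e0 where "e0 = min (- chv / (2 * el)) ((1 - d1) / 2)"
  have "chv / (2 * el) < 0" by (rule divide_neg_pos) (use chn' el0 in auto)
  then have q1: "- chv / (2 * el) > 0" by simp
  have q2: "(1 - d1) / 2 > 0" using d1l by simp
  have e0: "e0 > 0" unfolding e0_def using q1 q2 by simp
  have e0a: "e0 * el \<le> - chv / 2"
  proof -
    have "e0 \<le> - chv / (2 * el)" by (simp add: e0_def)
    then have "e0 * el \<le> - chv / (2 * el) * el" by (rule mult_right_mono) (use el0 in auto)
    moreover have "- chv / (2 * el) * el = - chv / 2" using el0 by (simp add: field_simps)
    ultimately show ?thesis by simp
  qed
  have "e0 \<le> (1 - d1) / 2" unfolding e0_def by (rule min.cobounded2)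
  then have e0b: "d1 + e0 < 1" using d1l by (simp add: field_simps)
  define K1 where "K1 = d0 + e0"
  define K2 where "K2 = d1 + e0"
  have A10: "lam^2 - c*lam - 1 + K1 * el < 0" using e0a chn' by (simp add: K1_def chv_def algebra_simps)
  have lim1: "((\<lambda>\<gamma>. \<gamma> + (lam^2 - c*lam - 1 + K1 * exp (\<gamma> * h) * el)) \<longlongrightarrow> 0 + (lam^2 - c*lam - 1 + K1 * exp (0 * h) * el)) (at_right 0)"
    by (intro tendsto_intros)
  have lim2: "((\<lambda>\<gamma>. \<gamma> + (- 1 + K2 * exp (\<gamma> * h))) \<longlongrightarrow> 0 + (- 1 + K2 * exp (0 * h))) (at_right 0)"
    by (intro tendsto_intros)
  have ev1: "eventually (\<lambda>\<gamma>. \<gamma> + (lam^2 - c*lam - 1 + K1 * exp (\<gamma> * h) * el) < 0) (at_right 0)"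
    using order_tendstoD(2)[OF lim1, of 0] A10 by simp
  have ev2: "eventually (\<lambda>\<gamma>. \<gamma> + (- 1 + K2 * exp (\<gamma> * h)) < 0) (at_right 0)"
    using order_tendstoD(2)[OF lim2, of 0] e0b by (simp add: K2_def)
  have "eventually (\<lambda>\<gamma>. 0 < \<gamma> \<and> \<gamma> + (lam^2 - c*lam - 1 + K1 * exp (\<gamma> * h) * el) < 0 \<and> \<gamma> + (- 1 + K2 * exp (\<gamma> * h)) < 0) (at_right 0)"
    by (intro eventually_conj eventually_at_right_less ev1 ev2)
  from eventually_happens[OF this] obtain \<gamma> where
    "0 < \<gamma> \<and> \<gamma> + (lam^2 - c*lam - 1 + K1 * exp (\<gamma> * h) * el) < 0 \<and> \<gamma> + (- 1 + K2 * exp (\<gamma> * h)) < 0"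
    by auto
  then have \<gamma>: "\<gamma> > 0" and P1: "\<gamma> + (lam^2 - c*lam - 1 + K1 * exp (\<gamma> * h) * exp (- lam * c * h)) < 0"
    and P2: "\<gamma> + (- 1 + K2 * exp (\<gamma> * h)) < 0" by (auto simp: el_def)
  have limd: "((\<lambda>x::real. x) \<longlongrightarrow> 0) (at_right 0)" by (rule tendsto_ident_at)
  have limp: "((\<lambda>x::real. C * x powr \<theta>) \<longlongrightarrow> C * 0) (at_right 0)"
    by (intro tendsto_intros tendsto_zero_powrI[OF limd tendsto_const] eventually_mono[OF eventually_at_right_less]) (use th in auto)
  have ed1: "eventually (\<lambda>x. x < \<delta>0) (at_right (0::real))" using order_tendstoD(2)[OF limd, of \<delta>0] \<delta>0 by simp
  have ed2: "eventually (\<lambda>x. x < \<kappa>/2) (at_right (0::real))" using order_tendstoD(2)[OF limd, of "\<kappa>/2"] k0 by simp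
  have ed3: "eventually (\<lambda>x. C * x powr \<theta> < e0) (at_right (0::real))" using order_tendstoD(2)[OF limp, of e0] e0 by simp
  have "eventually (\<lambda>x. 0 < x \<and> x < \<delta>0 \<and> x < \<kappa>/2 \<and> C * x powr \<theta> < e0) (at_right (0::real))"
    by (intro eventually_conj eventually_at_right_less ed1 ed2 ed3)
  from eventually_happens[OF this] obtain \<delta> where "0 < \<delta> \<and> \<delta> < \<delta>0 \<and> \<delta> < \<kappa>/2 \<and> C * \<delta> powr \<theta> < e0" by auto
  then have \<delta>: "0 < \<delta>" "\<delta> < \<delta>0" "\<delta> < \<kappa>/2" and C\<delta>: "C * \<delta> powr \<theta> < e0" by auto
  have Cu: "C * u powr \<theta> \<le> e0" if "0 < u" "u \<le> \<delta>" for u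
  proof -
    have "u powr \<theta> \<le> \<delta> powr \<theta>" using that th by (intro powr_mono2) auto
    then have "C * u powr \<theta> \<le> C * \<delta> powr \<theta>" using Cpos by simp
    then show ?thesis using C\<delta> by simp
  qed
  have K1: "K1 \<ge> 0" using d0g e0 by (simp add: K1_def)
  have K2: "K2 \<ge> 0" using d1g e0 by (simp add: K2_def)
  have gL: "g a - g p \<le> K1 * max (a - p) 0" if "0 \<le> a" "a \<le> \<delta>" "0 \<le> p" "p \<le> \<delta>" for a p
  proof (cases "a \<le> p")
    case True
    then have "g a \<le> g p" using that by (intro mono_onD[OF mono]) auto
    then show ?thesis using True by simp
  next
    case False
    then have pa: "p < a" by simp
    have "g a - g p \<le> K1 * (a - p)"
    proof (rule mvt_bound[OF pa])
      fix x assume "x \<in> {p..a}"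
      then show "(g has_real_derivative deriv g x) (at x)" using that \<delta> by (intro gdiff0) auto
    next
      fix x assume x: "x \<in> {p<..<a}"
      then have x0: "0 < x" "x \<le> \<delta>" using that by auto
      have "\<bar>deriv g x - d0\<bar> \<le> C * x powr \<theta>" using bnd[of x] x0 \<delta> by simp
      also have "\<dots> \<le> e0" using Cu x0 by simp
      finally show "deriv g x \<le> K1" by (simp add: K1_def)
    qed
    then show ?thesis using pa by simp
  qed
  have gR: "g a - g p \<le> K2 * max (a - p) 0"
    if "\<kappa> - \<delta> < a" "a < \<kappa> + \<delta>" "\<kappa> - \<delta> < p" "p < \<kappa> + \<delta>" for a p
  proof (cases "a \<le> p")
    case True
    then have "g a \<le> g p" using that \<delta> by (intro mono_onD[OF mono]) auto
    then show ?thesis using True by simp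
  next
    case False
    then have pa: "p < a" by simp
    have "g a - g p \<le> K2 * (a - p)"
    proof (rule mvt_bound[OF pa])
      fix x assume "x \<in> {p..a}"
      then show "(g has_real_derivative deriv g x) (at x)" using that \<delta> by (intro gdiffk) auto
    next
      fix x assume x: "x \<in> {p<..<a}"
      show "deriv g x \<le> K2"
      proof (cases "x < \<kappa>")
        case True
        define u where "u = \<kappa> - x"
        have u: "0 < u" "u \<le> \<delta>" using True x that by (auto simp: u_def)
        have "\<bar>d1 - deriv g (\<kappa> - u)\<bar> \<le> C * u powr \<theta>" using bnd[of u] u \<delta> by simp
        also have "\<dots> \<le> e0" using Cu u by simp
        finally show ?thesis by (simp add: K2_def u_def)
      next
        case False
        show ?thesis
        proof (cases "x = \<kappa>")
          case True then show ?thesis using e0 by (simp add: K2_def d1_def)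
        next
          case False
          then have xk: "x > \<kappa>" using \<open>\<not> x < \<kappa>\<close> by simp
          have "((\<lambda>y. \<kappa> + d1 * (y - \<kappa>)) has_real_derivative d1) (at x)"
            by (rule derivative_eq_intros refl | simp)+
          then have "(g has_real_derivative d1) (at x)"
            by (rule has_field_derivative_transform_within_open[of _ _ _ "{\<kappa><..}"]) (use xk lin in auto)
          then have "deriv g x = d1" by (rule DERIV_imp_deriv)
          then show ?thesis using e0 by (simp add: K2_def)
        qed
      qed
    qed
    then show ?thesis using pa by simp
  qed
  have phpos: "\<And>x. \<phi> x > 0" using front unfolding wavefront_def by (elim conjE) simp
  have phsol: "classical_sol g h 0 0 UNIV (\<lambda>t x. \<phi> (x + c * t))"
    using front unfolding wavefront_def by (elim conjE) assumption
  have phsol0: "\<forall>t\<in>UNIV. \<forall>x. (\<lambda>s. \<phi> (x + c * s)) differentiable (at t) \<and>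
        (\<forall>y. (\<lambda>y'. \<phi> (y' + c * t)) differentiable (at y)) \<and>
        deriv (\<lambda>y'. \<phi> (y' + c * t)) differentiable (at x) \<and>
        deriv (\<lambda>s. \<phi> (x + c * s)) t =
          deriv (deriv (\<lambda>y'. \<phi> (y' + c * t))) x - 0 * deriv (\<lambda>y'. \<phi> (y' + c * t)) x - \<phi> (x + c * t)
          + g (\<phi> (x - 0 + c * (t - h)))"
    using phsol unfolding classical_sol_def .
  have phsol1: "(\<lambda>s. \<phi> (x + c * s)) differentiable (at t) \<and>
        (\<forall>y. (\<lambda>y'. \<phi> (y' + c * t)) differentiable (at y)) \<and>
        deriv (\<lambda>y'. \<phi> (y' + c * t)) differentiable (at x) \<and>
        deriv (\<lambda>s. \<phi> (x + c * s)) t =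
          deriv (deriv (\<lambda>y'. \<phi> (y' + c * t))) x - 0 * deriv (\<lambda>y'. \<phi> (y' + c * t)) x - \<phi> (x + c * t)
          + g (\<phi> (x - 0 + c * (t - h)))" for t x
    using phsol0[rule_format, OF UNIV_I] .
  have phdiff: "\<phi> differentiable (at y)" for y
    using phsol1[of 0 0] by simp
  have phd: "(\<phi> has_real_derivative deriv \<phi> x) (at x)" for x
    using phdiff by (simp add: DERIV_deriv_iff_real_differentiable)
  have phdiff2: "deriv \<phi> differentiable (at x)" for x
    using phsol1[of x 0] by simp
  have phd2: "(deriv \<phi> has_real_derivative deriv (deriv \<phi>) x) (at x)" for x
    using phdiff2 by (simp add: DERIV_deriv_iff_real_differentiable)
  have pheq: "deriv (deriv \<phi>) x - c * deriv \<phi> x - \<phi> x + g (\<phi> (x - c * h)) = 0" for x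
  proof -
    have e: "deriv (\<lambda>s. \<phi> (x + c * s)) 0 =
          deriv (deriv (\<lambda>y'. \<phi> (y' + c * 0))) x - 0 * deriv (\<lambda>y'. \<phi> (y' + c * 0)) x - \<phi> (x + c * 0)
          + g (\<phi> (x - 0 + c * (0 - h)))"
      using phsol1[of x 0] by (elim conjE)
    have d1: "((\<lambda>s. x + c * s) has_real_derivative c) (at 0)"
      by (rule derivative_eq_intros refl | simp)+
    have "((\<lambda>s. \<phi> (x + c * s)) has_real_derivative deriv \<phi> (x + c * 0) * c) (at 0)"
      by (rule DERIV_chain'[OF d1 phd])
    then have "((\<lambda>s. \<phi> (x + c * s)) has_real_derivative deriv \<phi> x * c) (at 0)" by simp
    then have "deriv (\<lambda>s. \<phi> (x + c * s)) 0 = deriv \<phi> x * c" by (rule DERIV_imp_deriv)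
    moreover have "x - 0 + c * (0 - h) = x - c * h" by simp
    ultimately show ?thesis using e by (simp add: algebra_simps)
  qed
  show ?thesis
  proof (rule exI[of _ \<gamma>], rule conjI[OF \<gamma>], rule exI[of _ \<delta>], rule conjI[OF \<delta>(1)], intro allI, rule impI, elim conjE)
    fix w :: "real \<Rightarrow> real \<Rightarrow> real" and R :: real
    assume sol: "classical_sol g h c (c * h) {0<..} w"
      and cont: "continuous_on ({-h..} \<times> UNIV) (\<lambda>(t, z). w t z)"
      and bd: "bounded ((\<lambda>(t, z). w t z) ` ({-h..} \<times> UNIV))"
      and R: "R > c * h"
      and regL: "\<forall>t\<ge>-h. \<forall>z\<le>-R + c * h. 0 \<le> w t z \<and> w t z \<le> \<delta> \<and> 0 \<le> \<phi> z \<and> \<phi> z \<le> \<delta>"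
      and regR: "\<forall>t\<ge>-h. \<forall>z\<ge>R - c * h. \<bar>w t z - \<kappa>\<bar> < \<delta> \<and> \<bar>\<phi> z - \<kappa>\<bar> < \<delta>"
      and init: "\<forall>s\<in>{-h..0}. \<forall>z. w s z \<le> \<phi> z + \<delta> * eta lam z"
      and mid: "\<forall>t\<ge>0. \<forall>z\<in>{-R - c * h..R + c * h}. w t z \<le> \<phi> z"
    obtain B where B: "\<forall>x\<in>(\<lambda>(t, z). w t z) ` ({-h..} \<times> UNIV). \<bar>x\<bar> \<le> B"
      using bd unfolding bounded_real by blast
    have bdd: "\<bar>w t z\<bar> \<le> B" if "t \<ge> -h" for t z
      using B that by force
    have Lres: "w t z \<le> \<phi> z + \<delta> * exp (lam * z) * exp (- \<gamma> * t)" if "t \<ge> 0" "z \<le> -R" for t z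
      by (rule left_region[OF sol cont bdd phd phd2 pheq phpos h cpos R \<delta>(1) \<gamma> lpos K1 gL P1 _ _ _ that])
         (use regL init mid in auto)
    have Rres: "w t z \<le> \<phi> z + \<delta> * exp (- \<gamma> * t)" if "t \<ge> 0" "z \<ge> R" for t z
      by (rule right_region[OF sol cont bdd phd phd2 pheq phpos h cpos R \<delta>(1) \<gamma> K2 gR P2 _ _ _ that])
         (use regR init mid in auto)
    have Rpos: "R > 0" using R cpos h by (smt (verit) mult_nonneg_nonneg)
    show "\<forall>t\<ge>0. \<forall>z. w t z \<le> \<phi> z + \<delta> * eta lam z * exp (- \<gamma> * t)"
    proof (intro allI impI)
      fix t z :: real assume t: "t \<ge> 0"
      show "w t z \<le> \<phi> z + \<delta> * eta lam z * exp (- \<gamma> * t)"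
      proof (cases "z \<le> -R")
        case True
        then have "lam * z \<le> 0" using lpos Rpos by (simp add: mult_nonneg_nonpos)
        then have "eta lam z = exp (lam * z)" by (simp add: eta_def)
        then show ?thesis using Lres[OF t True] by simp
      next
        case nL: False
        show ?thesis
        proof (cases "z \<ge> R")
          case True
          then have "lam * z \<ge> 0" using lpos Rpos by simp
          then have "eta lam z = 1" by (simp add: eta_def)
          then show ?thesis using Rres[OF t True] by simp
        next
          case False
          have "c * h \<ge> 0" using cpos h by simp
          then have "z \<in> {-R - c * h..R + c * h}" using nL False by simp
          then have "w t z \<le> \<phi> z" using mid t by blast
          moreover have "\<delta> * eta lam z * exp (- \<gamma> * t) \<ge> 0" using \<delta> by (simp add: eta_def)
          ultimately show ?thesis by simp
        qed
      qed
    qed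
  qed
qed



end
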